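(* Let $\mathcal{R}$ be a fusion ring with basis $\{x_1=1,\ldots,x_m\}$ and $\mathcal{B}=\mathcal{R}\otimes_\mathbb{Z}\mathbb{C}$. If the comultiplication $\Delta:\mathcal{B}\to\mathcal{B}\otimes\mathcal{B}$, $\Delta(x_j)=\frac1{d_j}x_j\otimes x_j$, is a positive map, then the convolution on $\mathcal{B}$ is positive: $x\ast y\geq0$ for all $x,y\in\mathcal{B}$ with $x,y\geq0$.
   Context: A fusion ring is a ring $\mathcal{R}$ which is a free $\mathbb{Z}$-module with a finite basis $\{x_1=1,\ldots,x_m\}$ such that $x_ix_j=\sum_k N_{ij}^k x_k$ with $N_{ij}^k\in\mathbb{N}$; there is an involution $i\mapsto i^*$ whose $\mathbb{Z}$-linear extension is an anti-involution of $\mathcal{R}$; and the coefficient of $x_1$ in $x_ix_j$ equals $\delta_{i,j^*}$. $\mathcal{B}$ is the finite-dimensional $C^*$-algebra with involution $(\sum c_jx_j)^*=\sum\overline{c_j}x_{j^*}$ and faithful trace $\tau(x_j)=\delta_{j,1}$. $d_j$ is the operator norm of $x_j$ in $\mathcal{B}$ (the Frobenius–Perron dimension). The convolution is the bilinear map $\mathcal{B}\times\mathcal{B}\to\mathcal{B}$ with $x_i\ast x_j=\delta_{ij}d_i^{-1}x_i$. *)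

theory Defs
  imports Complex_Main
begin

text \<open>A fusion ring with basis indexed by a finite type 'a: structure constants
  N i j k (coefficient of x_k in x_i x_j), unit index e (x_e = 1) and involution dual.\<close>

definition fusion_ring :: "('a::finite \<Rightarrow> 'a \<Rightarrow> 'a \<Rightarrow> nat) \<Rightarrow> 'a \<Rightarrow> ('a \<Rightarrow> 'a) \<Rightarrow> bool" where
  "fusion_ring N e dual \<longleftrightarrow>
     (\<forall>i j l p. (\<Sum>k\<in>UNIV. N i j k * N k l p) = (\<Sum>k\<in>UNIV. N j l k * N i k p)) \<and>
     (\<forall>j k. N e j k = (if j = k then 1 else 0)) \<and>
     (\<forall>j k. N j e k = (if j = k then 1 else 0)) \<and>
     (\<forall>i. dual (dual i) = i) \<and>
     (\<forall>i j k. N i j k = N (dual j) (dual i) (dual k)) \<and>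
     (\<forall>i j. N i j e = (if i = dual j then 1 else 0))"

text \<open>The complexified algebra: elements are coefficient functions 'b \<Rightarrow> complex.
  These generic operations are used both for B (index 'a) and for B \<otimes> B (index 'a \<times> 'a).\<close>

definition alg_mult :: "('b::finite \<Rightarrow> 'b \<Rightarrow> 'b \<Rightarrow> nat) \<Rightarrow> ('b \<Rightarrow> complex) \<Rightarrow> ('b \<Rightarrow> complex) \<Rightarrow> ('b \<Rightarrow> complex)" where
  "alg_mult N a b = (\<lambda>k. \<Sum>i\<in>UNIV. \<Sum>j\<in>UNIV. a i * b j * of_nat (N i j k))"

definition alg_star :: "('b \<Rightarrow> 'b) \<Rightarrow> ('b \<Rightarrow> complex) \<Rightarrow> ('b \<Rightarrow> complex)" where
  "alg_star dual a = (\<lambda>k. cnj (a (dual k)))"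

definition alg_pos :: "('b::finite \<Rightarrow> 'b \<Rightarrow> 'b \<Rightarrow> nat) \<Rightarrow> ('b \<Rightarrow> 'b) \<Rightarrow> ('b \<Rightarrow> complex) \<Rightarrow> bool" where
  "alg_pos N dual a \<longleftrightarrow> (\<exists>b. a = alg_mult N (alg_star dual b) b)"

definition basis_vec :: "'b \<Rightarrow> ('b \<Rightarrow> complex)" where
  "basis_vec j = (\<lambda>k. if k = j then 1 else 0)"

text \<open>Trace tau(a) = coefficient of x_1, and the GNS (L^2) norm sqrt(tau(a* a)).\<close>
definition tr_norm :: "('a::finite \<Rightarrow> 'a \<Rightarrow> 'a \<Rightarrow> nat) \<Rightarrow> 'a \<Rightarrow> ('a \<Rightarrow> 'a) \<Rightarrow> ('a \<Rightarrow> complex) \<Rightarrow> real" where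
  "tr_norm N e dual a = sqrt (Re (alg_mult N (alg_star dual a) a e))"

text \<open>d_j: operator norm of x_j, i.e. norm of left multiplication by x_j on L^2(B,tau)
  (the faithful GNS representation, which realises the C*-norm of B).\<close>
definition fp_dim :: "('a::finite \<Rightarrow> 'a \<Rightarrow> 'a \<Rightarrow> nat) \<Rightarrow> 'a \<Rightarrow> ('a \<Rightarrow> 'a) \<Rightarrow> 'a \<Rightarrow> real" where
  "fp_dim N e dual j = Sup {tr_norm N e dual (alg_mult N (basis_vec j) a) | a. tr_norm N e dual a \<le> 1}"

definition convolution :: "('a::finite \<Rightarrow> 'a \<Rightarrow> 'a \<Rightarrow> nat) \<Rightarrow> 'a \<Rightarrow> ('a \<Rightarrow> 'a) \<Rightarrow> ('a \<Rightarrow> complex) \<Rightarrow> ('a \<Rightarrow> complex) \<Rightarrow> ('a \<Rightarrow> complex)" where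
  "convolution N e dual a b = (\<lambda>k. a k * b k / of_real (fp_dim N e dual k))"

definition tensor_N :: "('a \<Rightarrow> 'a \<Rightarrow> 'a \<Rightarrow> nat) \<Rightarrow> ('a \<times> 'a) \<Rightarrow> ('a \<times> 'a) \<Rightarrow> ('a \<times> 'a) \<Rightarrow> nat" where
  "tensor_N N = (\<lambda>(i, j) (k, l) (p, q). N i k p * N j l q)"

definition tensor_dual :: "('a \<Rightarrow> 'a) \<Rightarrow> ('a \<times> 'a) \<Rightarrow> ('a \<times> 'a)" where
  "tensor_dual dual = (\<lambda>(i, j). (dual i, dual j))"

definition comult :: "('a::finite \<Rightarrow> 'a \<Rightarrow> 'a \<Rightarrow> nat) \<Rightarrow> 'a \<Rightarrow> ('a \<Rightarrow> 'a) \<Rightarrow> ('a \<Rightarrow> complex) \<Rightarrow> ('a \<times> 'a \<Rightarrow> complex)" where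
  "comult N e dual a = (\<lambda>(i, j). if i = j then a i / of_real (fp_dim N e dual i) else 0)"

end

theory Submission
  imports Defs "HOL-Analysis.Analysis" "HOL-Library.Function_Algebras" "HOL-Computational_Algebra.Fundamental_Theorem_Algebra"
begin


lemma sum_fun_apply: "(sum f S) k = sum (\<lambda>i. f i k) S"
  by (induct S rule: infinite_finite_induct) auto

lemma cnj_mult_self: "cnj z * z = complex_of_real ((Re z)\<^sup>2 + (Im z)\<^sup>2)"
  by (simp add: complex_eq_iff power2_eq_square)

lemma interp:
  fixes R :: "real set"
  assumes "finite R"
  shows "\<exists>f :: complex poly. \<forall>r\<in>R. poly f (of_real r) = of_real (sqrt r)"
  using assms
proof (induct R rule: finite_induct)
  case empty then show ?case by simp
next
  case (insert r R)
  then obtain f :: "complex poly" where f: "\<forall>s\<in>R. poly f (of_real s) = of_real (sqrt s)" by blast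
  define P where "P = (\<Prod>s\<in>R. [:- complex_of_real s, 1:])"
  have Pr: "poly P (of_real r) \<noteq> 0"
    unfolding P_def poly_prod using insert(1,2) by (auto simp: prod_zero_iff)
  have Ps: "poly P (of_real s) = 0" if "s \<in> R" for s
    unfolding P_def poly_prod using insert(1) that by (auto simp: prod_zero_iff)
  define c where "c = (of_real (sqrt r) - poly f (of_real r)) / poly P (of_real r)"
  have "\<forall>s\<in>insert r R. poly (f + smult c P) (of_real s) = of_real (sqrt s)"
    using f Ps Pr unfolding c_def by auto
  then show ?case by blast
qed

lemma prod_dvd:
  fixes R :: "real set" and h :: "complex poly"
  assumes "finite R" "\<forall>r\<in>R. poly h (of_real r) = 0"
  shows "(\<Prod>r\<in>R. [:- of_real r, 1:]) dvd h"
  using assms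
proof (induct R arbitrary: h rule: finite_induct)
  case empty then show ?case by simp
next
  case (insert r R)
  have "[:- of_real r, 1:] dvd h" using insert(4) by (simp add: poly_eq_0_iff_dvd[symmetric])
  then obtain h1 where h: "h = [:- of_real r, 1:] * h1" by (rule dvdE)
  have "\<forall>s\<in>R. poly h1 (of_real s) = 0"
  proof
    fix s assume s: "s \<in> R"
    then have "s \<noteq> r" using insert(2) by auto
    moreover have "poly h (of_real s) = 0" using insert(4) s by auto
    ultimately show "poly h1 (of_real s) = 0" unfolding h by simp
  qed
  then have "(\<Prod>r\<in>R. [:- of_real r, 1:]) dvd h1" by (rule insert(3))
  then show ?case unfolding h prod.insert[OF insert(1,2)] by (rule mult_dvd_mono[OF dvd_refl])
qed

locale fr =
  fixes N :: "'b::finite \<Rightarrow> 'b \<Rightarrow> 'b \<Rightarrow> nat" and e :: 'b and dual :: "'b \<Rightarrow> 'b"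
  assumes fr: "fusion_ring N e dual"
begin

lemma Nassoc: "(\<Sum>k\<in>UNIV. N i j k * N k l p) = (\<Sum>k\<in>UNIV. N j l k * N i k p)"
  using fr unfolding fusion_ring_def by blast
lemma NunitL: "N e j k = (if j = k then 1 else 0)"
  using fr unfolding fusion_ring_def by blast
lemma NunitR: "N j e k = (if j = k then 1 else 0)"
  using fr unfolding fusion_ring_def by blast
lemma dd[simp]: "dual (dual i) = i"
  using fr unfolding fusion_ring_def by blast
lemma Nd: "N i j k = N (dual j) (dual i) (dual k)"
  using fr unfolding fusion_ring_def by blast
lemma Ne: "N i j e = (if i = dual j then 1 else 0)"
  using fr unfolding fusion_ring_def by blast

lemma dual_eq_iff[simp]: "dual i = dual j \<longleftrightarrow> i = j"
  by (metis dd)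

lemma bij_dual: "bij dual"
  by (metis bijI' dd)

lemma reidx: "(\<Sum>i\<in>UNIV. f (dual i)) = (\<Sum>i\<in>UNIV. f i)"
  using sum.reindex[of dual UNIV f] bij_dual by (simp add: bij_is_inj bij_is_surj)

abbreviation mult where "mult \<equiv> alg_mult N"
abbreviation st where "st \<equiv> alg_star dual"

lemma swap3: "(\<Sum>k\<in>A. \<Sum>j\<in>B. \<Sum>l\<in>C. F k j l) = (\<Sum>j\<in>B. \<Sum>l\<in>C. \<Sum>k\<in>A. F k j l)"
proof -
  have "(\<Sum>k\<in>A. \<Sum>j\<in>B. \<Sum>l\<in>C. F k j l) = (\<Sum>j\<in>B. \<Sum>k\<in>A. \<Sum>l\<in>C. F k j l)"
    by (rule sum.swap)
  also have "\<dots> = (\<Sum>j\<in>B. \<Sum>l\<in>C. \<Sum>k\<in>A. F k j l)"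
    by (rule sum.cong[OF refl], rule sum.swap)
  finally show ?thesis .
qed

lemma swap4: "(\<Sum>k\<in>A. \<Sum>l\<in>B. \<Sum>i\<in>C. \<Sum>j\<in>D. F i j k l) = (\<Sum>i\<in>C. \<Sum>j\<in>D. \<Sum>l\<in>B. \<Sum>k\<in>A. F i j k l)"
proof -
  have "(\<Sum>k\<in>A. \<Sum>l\<in>B. \<Sum>i\<in>C. \<Sum>j\<in>D. F i j k l) = (\<Sum>k\<in>A. \<Sum>i\<in>C. \<Sum>j\<in>D. \<Sum>l\<in>B. F i j k l)"
    by (rule sum.cong[OF refl], rule swap3)
  also have "\<dots> = (\<Sum>i\<in>C. \<Sum>j\<in>D. \<Sum>k\<in>A. \<Sum>l\<in>B. F i j k l)"
    by (rule swap3)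
  also have "\<dots> = (\<Sum>i\<in>C. \<Sum>j\<in>D. \<Sum>l\<in>B. \<Sum>k\<in>A. F i j k l)"
    by (rule sum.cong[OF refl], rule sum.cong[OF refl], rule sum.swap)
  finally show ?thesis .
qed

lemma m_assoc: "mult (mult a b) c = mult a (mult b c)"
proof
  fix p
  have "mult (mult a b) c p = (\<Sum>k\<in>UNIV. \<Sum>l\<in>UNIV. \<Sum>i\<in>UNIV. \<Sum>j\<in>UNIV. a i * b j * c l * (of_nat (N i j k) * of_nat (N k l p)))"
    unfolding alg_mult_def by (simp add: sum_distrib_right sum_distrib_left mult_ac)
  also have "\<dots> = (\<Sum>i\<in>UNIV. \<Sum>j\<in>UNIV. \<Sum>l\<in>UNIV. \<Sum>k\<in>UNIV. a i * b j * c l * (of_nat (N i j k) * of_nat (N k l p)))"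
    by (rule swap4)
  also have "\<dots> = (\<Sum>i\<in>UNIV. \<Sum>j\<in>UNIV. \<Sum>l\<in>UNIV. a i * b j * c l * of_nat (\<Sum>k\<in>UNIV. N i j k * N k l p))"
    by (simp add: sum_distrib_left)
  also have "\<dots> = (\<Sum>i\<in>UNIV. \<Sum>j\<in>UNIV. \<Sum>l\<in>UNIV. a i * b j * c l * of_nat (\<Sum>k\<in>UNIV. N j l k * N i k p))"
    by (simp add: Nassoc)
  also have "\<dots> = (\<Sum>i\<in>UNIV. \<Sum>j\<in>UNIV. \<Sum>l\<in>UNIV. \<Sum>k\<in>UNIV. a i * b j * c l * (of_nat (N j l k) * of_nat (N i k p)))"
    by (simp add: sum_distrib_left)
  also have "\<dots> = (\<Sum>i\<in>UNIV. \<Sum>k\<in>UNIV. \<Sum>j\<in>UNIV. \<Sum>l\<in>UNIV. a i * b j * c l * (of_nat (N j l k) * of_nat (N i k p)))"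
    by (rule sum.cong[OF refl], rule swap3[symmetric])
  also have "\<dots> = mult a (mult b c) p"
    unfolding alg_mult_def by (simp add: sum_distrib_right sum_distrib_left mult_ac)
  finally show "mult (mult a b) c p = mult a (mult b c) p" .
qed

lemma reidx': "sum f UNIV = (\<Sum>i\<in>UNIV. f (dual i))"
  by (rule reidx[symmetric])

lemma st_st[simp]: "st (st a) = a"
  unfolding alg_star_def by simp

lemma st_mult: "st (mult a b) = mult (st b) (st a)"
proof
  fix k
  have "st (mult a b) k = (\<Sum>i\<in>UNIV. \<Sum>j\<in>UNIV. cnj (a i) * cnj (b j) * of_nat (N i j (dual k)))"
    unfolding alg_star_def alg_mult_def by simp
  also have "\<dots> = (\<Sum>j\<in>UNIV. \<Sum>i\<in>UNIV. cnj (a i) * cnj (b j) * of_nat (N i j (dual k)))"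
    by (rule sum.swap)
  also have "\<dots> = (\<Sum>j\<in>UNIV. \<Sum>i\<in>UNIV. cnj (a (dual i)) * cnj (b (dual j)) * of_nat (N (dual i) (dual j) (dual k)))"
  proof -
    have "(\<Sum>j\<in>UNIV. \<Sum>i\<in>UNIV. cnj (a i) * cnj (b j) * of_nat (N i j (dual k))) = (\<Sum>j\<in>UNIV. \<Sum>i\<in>UNIV. cnj (a (dual i)) * cnj (b j) * of_nat (N (dual i) j (dual k)))"
      by (rule sum.cong[OF refl], rule reidx')
    also have "\<dots> = (\<Sum>j\<in>UNIV. \<Sum>i\<in>UNIV. cnj (a (dual i)) * cnj (b (dual j)) * of_nat (N (dual i) (dual j) (dual k)))"
      by (rule reidx')
    finally show ?thesis .
  qed
  also have "\<dots> = mult (st b) (st a) k"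
    unfolding alg_star_def alg_mult_def by (simp add: Nd[of "dual _" "dual _" "dual k"] mult_ac)
  finally show "st (mult a b) k = mult (st b) (st a) k" .
qed


abbreviation one where "one \<equiv> basis_vec e"

lemma m_add_left: "mult (a + b) c = mult a c + mult b c"
  unfolding alg_mult_def by (rule ext) (simp add: distrib_right sum.distrib)
lemma m_add_right: "mult a (b + c) = mult a b + mult a c"
  unfolding alg_mult_def by (rule ext) (simp add: distrib_left distrib_right sum.distrib)
lemma m_scale_left: "mult (\<lambda>k. z * a k) b = (\<lambda>k. z * mult a b k)"
  unfolding alg_mult_def by (rule ext) (simp add: sum_distrib_left mult_ac)
lemma m_scale_right: "mult a (\<lambda>k. z * b k) = (\<lambda>k. z * mult a b k)"
  unfolding alg_mult_def by (rule ext) (simp add: sum_distrib_left mult_ac)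
lemma m_zero_left[simp]: "mult 0 a = 0"
  unfolding alg_mult_def by (rule ext) simp
lemma m_zero_right[simp]: "mult a 0 = 0"
  unfolding alg_mult_def by (rule ext) simp
lemma m_sum_left: "mult (\<Sum>i\<in>S. f i) b = (\<Sum>i\<in>S. mult (f i) b)"
  by (induct S rule: infinite_finite_induct) (metis sum.infinite m_zero_left, metis sum.empty m_zero_left, metis sum.insert m_add_left)
lemma m_sum_right: "mult b (\<Sum>i\<in>S. f i) = (\<Sum>i\<in>S. mult b (f i))"
  by (induct S rule: infinite_finite_induct) (metis sum.infinite m_zero_right, metis sum.empty m_zero_right, metis sum.insert m_add_right)
lemma m_one_left[simp]: "mult one a = a"
proof
  fix k
  have "mult one a k = (\<Sum>i\<in>UNIV. \<Sum>j\<in>UNIV. (if i = e then a j * of_nat (N e j k) else 0))"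
    unfolding alg_mult_def basis_vec_def by (rule sum.cong[OF refl])+ simp
  also have "\<dots> = (\<Sum>j\<in>UNIV. \<Sum>i\<in>UNIV. (if i = e then a j * of_nat (N e j k) else 0))"
    by (rule sum.swap)
  also have "\<dots> = (\<Sum>j\<in>UNIV. a j * of_nat (N e j k))"
    by simp
  also have "\<dots> = (\<Sum>j\<in>UNIV. if j = k then a k else 0)"
    by (rule sum.cong[OF refl]) (simp add: NunitL)
  finally show "mult one a k = a k" by simp
qed
lemma m_one_right[simp]: "mult a one = a"
proof
  fix k
  have "mult a one k = (\<Sum>i\<in>UNIV. \<Sum>j\<in>UNIV. (if j = e then a i * of_nat (N i e k) else 0))"
    unfolding alg_mult_def basis_vec_def by (rule sum.cong[OF refl])+ simp
  also have "\<dots> = (\<Sum>i\<in>UNIV. a i * of_nat (N i e k))"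
    by simp
  also have "\<dots> = (\<Sum>i\<in>UNIV. if i = k then a k else 0)"
    by (rule sum.cong[OF refl]) (simp add: NunitR)
  finally show "mult a one k = a k" by simp
qed
lemma st_add: "st (a + b) = st a + st b"
  unfolding alg_star_def by auto
lemma st_zero[simp]: "st 0 = 0"
  unfolding alg_star_def by auto
lemma st_sum: "st (\<Sum>i\<in>S. f i) = (\<Sum>i\<in>S. st (f i))"
  by (induct S rule: infinite_finite_induct) (metis sum.infinite st_zero, metis sum.empty st_zero, metis sum.insert st_add)
lemma st_scale: "st (\<lambda>k. z * a k) = (\<lambda>k. cnj z * st a k)"
  unfolding alg_star_def by auto
lemma dual_e[simp]: "dual e = e"
proof -
  have "N e e e = 1" using NunitL by simp
  then show ?thesis using Ne[of e e] by (metis one_neq_zero)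
qed
lemma dual_eq_e[simp]: "dual k = e \<longleftrightarrow> k = e"
  by (metis dd dual_e)
lemma st_one[simp]: "st one = one"
  unfolding alg_star_def basis_vec_def by (rule ext) (simp add: dual_eq_e)

lemma tr_norm2: "mult (st u) u e = (\<Sum>k\<in>UNIV. of_real ((Re (u k))\<^sup>2 + (Im (u k))\<^sup>2))"
proof -
  have "mult (st u) u e = (\<Sum>i\<in>UNIV. \<Sum>j\<in>UNIV. cnj (u (dual i)) * u j * of_nat (N i j e))"
    unfolding alg_mult_def alg_star_def by simp
  also have "\<dots> = (\<Sum>j\<in>UNIV. \<Sum>i\<in>UNIV. cnj (u (dual i)) * u j * of_nat (N i j e))"
    by (rule sum.swap)
  also have "\<dots> = (\<Sum>j\<in>UNIV. cnj (u j) * u j)"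
  proof (rule sum.cong[OF refl])
    fix j
    have "(\<Sum>i\<in>UNIV. cnj (u (dual i)) * u j * of_nat (N i j e)) = (\<Sum>i\<in>UNIV. if i = dual j then cnj (u (dual i)) * u j else 0)"
      by (rule sum.cong[OF refl]) (simp add: Ne)
    also have "\<dots> = cnj (u j) * u j" by simp
    finally show "(\<Sum>i\<in>UNIV. cnj (u (dual i)) * u j * of_nat (N i j e)) = cnj (u j) * u j" .
  qed
  also have "\<dots> = (\<Sum>k\<in>UNIV. of_real ((Re (u k))\<^sup>2 + (Im (u k))\<^sup>2))"
    by (simp only: cnj_mult_self)
  finally show ?thesis .
qed

lemma tr_real: "mult (st u) u e = of_real (\<Sum>k\<in>UNIV. (Re (u k))\<^sup>2 + (Im (u k))\<^sup>2)"
  by (simp only: tr_norm2 of_real_sum)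

lemma tr_pos: "Im (mult (st u) u e) = 0" "Re (mult (st u) u e) \<ge> 0"
  unfolding tr_real Im_complex_of_real Re_complex_of_real
  by (rule refl, rule sum_nonneg, simp)

lemma tr_faithful: assumes "mult (st u) u e = 0" shows "u = 0"
proof
  fix k
  have S: "(\<Sum>k\<in>UNIV. (Re (u k))\<^sup>2 + (Im (u k))\<^sup>2) = 0"
    using assms unfolding tr_real of_real_eq_0_iff .
  have nn: "\<And>x. x \<in> UNIV \<Longrightarrow> 0 \<le> (Re (u x))\<^sup>2 + (Im (u x))\<^sup>2" by simp
  have "\<forall>x\<in>UNIV. (Re (u x))\<^sup>2 + (Im (u x))\<^sup>2 = 0"
    by (rule iffD1[OF sum_nonneg_eq_0_iff[OF finite nn] S])
  then have "(Re (u k))\<^sup>2 + (Im (u k))\<^sup>2 = 0" by (rule bspec) simp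
  then have "Re (u k) = 0" "Im (u k) = 0" by (simp_all only: sum_power2_eq_zero_iff)
  then show "u k = 0 k" by (simp add: complex_eq_iff)
qed

end

locale frp = fr N e dual for N :: "'b::finite \<Rightarrow> 'b \<Rightarrow> 'b \<Rightarrow> nat" and e dual +
  fixes p :: "'b \<Rightarrow> complex"
begin

primrec pw :: "nat \<Rightarrow> 'b \<Rightarrow> complex" where
  "pw 0 = one"
| "pw (Suc n) = mult p (pw n)"

definition ev :: "complex poly \<Rightarrow> 'b \<Rightarrow> complex" where
  "ev f = (\<Sum>i\<le>degree f. (\<lambda>k. coeff f i * pw i k))"

lemma ev_bound: assumes "degree f < n" shows "ev f = (\<Sum>i<n. (\<lambda>k. coeff f i * pw i k))"
  unfolding ev_def
proof (rule sum.mono_neutral_left)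
  show "finite {..<n}" by simp
  show "{..degree f} \<subseteq> {..<n}" using assms by auto
  show "\<forall>i\<in>{..<n} - {..degree f}. (\<lambda>k. coeff f i * pw i k) = 0"
    by (auto simp: coeff_eq_0 zero_fun_def)
qed

lemma ev_0[simp]: "ev 0 = 0"
  by (rule ext) (simp add: ev_def sum_fun_apply)

lemma ev_pCons: "ev (pCons a f) = (\<lambda>k. a * one k) + mult p (ev f)"
proof -
  define m where "m = Suc (degree f)"
  have d: "degree (pCons a f) < Suc m" unfolding m_def
    using degree_pCons_le[of a f] by simp
  have "ev (pCons a f) = (\<Sum>i<Suc m. (\<lambda>k. coeff (pCons a f) i * pw i k))"
    by (rule ev_bound[OF d])
  also have "\<dots> = (\<lambda>k. a * one k) + (\<Sum>i<m. (\<lambda>k. coeff f i * pw (Suc i) k))"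
    by (simp only: sum.lessThan_Suc_shift coeff_pCons_0 coeff_pCons_Suc pw.simps(1))
  also have "(\<Sum>i<m. (\<lambda>k. coeff f i * pw (Suc i) k)) = (\<Sum>i<m. mult p (\<lambda>k. coeff f i * pw i k))"
    by (simp only: pw.simps(2) m_scale_right)
  also have "\<dots> = mult p (\<Sum>i<m. (\<lambda>k. coeff f i * pw i k))"
    by (simp only: m_sum_right)
  also have "(\<Sum>i<m. (\<lambda>k. coeff f i * pw i k)) = ev f"
    by (rule ev_bound[symmetric]) (simp add: m_def)
  finally show ?thesis .
qed

lemma ev_const: "ev [:c:] = (\<lambda>k. c * one k)"
  using ev_pCons[of c 0] by simp

lemma ev_X: "ev [:0, 1:] = p"
proof -
  have "ev [:0,1:] = (\<lambda>k. 0 * one k) + mult p (ev [:1:])" by (rule ev_pCons)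
  moreover have "ev [:1:] = one" using ev_const[of 1] by simp
  ultimately show ?thesis by (simp add: fun_eq_iff)
qed

lemma ev_add: "ev (f + g) = ev f + ev g"
proof (induct f arbitrary: g rule: pCons_induct)
  case 0 then show ?case by simp
next
  case (pCons a f)
  show ?case
  proof (cases g rule: pCons_cases)
    case (pCons b g')
    have "ev (pCons a f + g) = (\<lambda>k. (a + b) * one k) + mult p (ev f + ev g')"
      unfolding pCons add_pCons ev_pCons pCons.hyps(2) by simp
    also have "\<dots> = ev (pCons a f) + ev g"
      unfolding pCons ev_pCons m_add_right by (simp add: fun_eq_iff algebra_simps)
    finally show ?thesis .
  qed
qed

lemma ev_smult: "ev (smult c f) = (\<lambda>k. c * ev f k)"
proof (induct f rule: pCons_induct)
  case 0 then show ?case by (simp add: zero_fun_def)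
next
  case (pCons a f)
  show ?case unfolding smult_pCons ev_pCons pCons.hyps(2) m_scale_right
    by (simp add: fun_eq_iff algebra_simps)
qed

lemma ev_minus: "ev (- f) = (\<lambda>k. - ev f k)"
  using ev_smult[of "-1" f] by simp

lemma ev_diff: "ev (f - g) = ev f - ev g"
  using ev_add[of f "- g"] ev_minus[of g] by (simp add: fun_eq_iff)

lemma ev_mult: "ev (f * g) = mult (ev f) (ev g)"
proof (induct f rule: pCons_induct)
  case 0 then show ?case by (simp only: mult_zero_class.mult_zero_left ev_0 m_zero_left)
next
  case (pCons a f)
  have "ev (pCons a f * g) = (\<lambda>k. a * ev g k) + mult p (mult (ev f) (ev g))"
    by (simp add: ev_add ev_smult ev_pCons pCons.hyps(2) zero_fun_def)
  also have "\<dots> = mult (ev (pCons a f)) (ev g)"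
    unfolding ev_pCons m_add_left m_scale_left m_assoc by simp
  finally show ?case .
qed

lemma ev_comm: "mult (ev f) (ev g) = mult (ev g) (ev f)"
  by (metis ev_mult mult.commute)

lemma ev_mult_w: "mult (ev (f * g)) w = mult (ev f) (mult (ev g) w)"
  by (simp add: ev_mult m_assoc)

lemma ev_sum: "ev (\<Sum>i\<in>S. f i) = (\<Sum>i\<in>S. ev (f i))"
  by (induct S rule: infinite_finite_induct) (simp_all add: ev_add)

lemma ev_monom: "ev (monom c n) = (\<lambda>k. c * pw n k)"
proof -
  have "ev (monom c n) = (\<Sum>i<Suc n. (\<lambda>k. coeff (monom c n) i * pw i k))"
    by (rule ev_bound) (simp add: degree_monom_le le_less_trans[OF degree_monom_le])
  also have "\<dots> = (\<Sum>i<Suc n. if i = n then (\<lambda>k. c * pw n k) else 0)"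
    by (rule sum.cong[OF refl]) (auto simp: zero_fun_def)
  also have "\<dots> = (\<lambda>k. c * pw n k)" by simp
  finally show ?thesis .
qed

lemma st_ev: assumes herm: "st p = p" shows "st (ev f) = ev (map_poly cnj f)"
proof (induct f rule: pCons_induct)
  case 0 then show ?case by (simp only: map_poly_0 ev_0 st_zero)
next
  case (pCons a f)
  have "st (ev (pCons a f)) = (\<lambda>k. cnj a * one k) + mult (ev (map_poly cnj f)) p"
    unfolding ev_pCons st_add st_mult pCons.hyps(2) herm
    by (metis st_one st_scale)
  also have "mult (ev (map_poly cnj f)) p = mult p (ev (map_poly cnj f))"
    using ev_comm[of "map_poly cnj f" "[:0,1:]"] unfolding ev_X .
  finally show ?case by (simp add: map_poly_pCons ev_pCons)
qed


lemma ev_lin: "ev [:-z, 1:] = (\<lambda>k. - z * one k) + p"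
proof -
  have "ev [:-z,1:] = (\<lambda>k. - z * one k) + mult p (ev [:1:])" by (rule ev_pCons)
  moreover have "ev [:1:] = one" using ev_const[of 1] by simp
  ultimately show ?thesis by simp
qed

lemma mult_lin: "mult (ev [:-z, 1:]) u = (\<lambda>k. - z * u k) + mult p u"
  unfolding ev_lin m_add_left m_scale_left by simp

lemma annih: "\<exists>g. g \<noteq> 0 \<and> ev g = 0"
proof -
  define \<phi> :: "('b \<Rightarrow> complex) \<Rightarrow> complex ^ 'b" where "\<phi> = (\<lambda>a. \<chi> k. a k)"
  have \<phi>inj: "\<phi> a = \<phi> b \<Longrightarrow> a = b" for a b
    unfolding \<phi>_def by (simp add: vec_eq_iff fun_eq_iff)
  have \<phi>sum: "\<phi> (\<Sum>i\<in>S. f i) = (\<Sum>i\<in>S. \<phi> (f i))" for S :: "nat set" and f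
    unfolding \<phi>_def by (simp add: vec_eq_iff sum_fun_apply)
  have \<phi>sc: "\<phi> (\<lambda>k. of_real c * a k) = c *\<^sub>R \<phi> a" for c a
  proof (rule vec_eq_iff[THEN iffD2], rule allI)
    fix k
    show "\<phi> (\<lambda>k. of_real c * a k) $ k = (c *\<^sub>R \<phi> a) $ k"
      unfolding \<phi>_def vector_scaleR_component vec_lambda_beta by (simp add: scaleR_conv_of_real)
  qed
  define M where "M = DIM(complex ^ 'b)"
  show ?thesis
  proof (cases "inj_on pw {..M}")
    case False
    then obtain i j where ij: "i \<in> {..M}" "j \<in> {..M}" "i \<noteq> j" "pw i = pw j"
      unfolding inj_on_def by blast
    define g where "g = monom (1::complex) i - monom 1 j"
    have "coeff g i = 1" unfolding g_def using ij(3) by simp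
    then have "g \<noteq> 0" by auto
    moreover have "ev g = 0" unfolding g_def ev_diff ev_monom ij(4) by simp
    ultimately show ?thesis by blast
  next
    case True
    define S where "S = (\<lambda>i. \<phi> (pw i)) ` {..M}"
    have inj: "inj_on (\<lambda>i. \<phi> (pw i)) {..M}"
      using True \<phi>inj unfolding inj_on_def by blast
    have cS: "card S = Suc M" unfolding S_def using card_image[OF inj] by simp
    have fS: "finite S" unfolding S_def by simp
    have "\<not> independent S" using independent_bound[of S] cS unfolding M_def by auto
    then obtain u where u: "\<exists>v\<in>S. u v \<noteq> 0" "(\<Sum>v\<in>S. u v *\<^sub>R v) = 0"
      using dependent_finite[OF fS] by blast
    then obtain i0 where i0: "i0 \<in> {..M}" "u (\<phi> (pw i0)) \<noteq> 0" unfolding S_def by blast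
    define g where "g = (\<Sum>i\<le>M. monom (complex_of_real (u (\<phi> (pw i)))) i)"
    have "coeff g i0 = (\<Sum>i\<le>M. if i = i0 then complex_of_real (u (\<phi> (pw i))) else 0)"
      unfolding g_def coeff_sum coeff_monom by simp
    also have "\<dots> = complex_of_real (u (\<phi> (pw i0)))" using i0(1) by simp
    finally have "g \<noteq> 0" using i0(2) by auto
    moreover have "ev g = 0"
    proof (rule \<phi>inj)
      have "\<phi> (ev g) = (\<Sum>i\<le>M. u (\<phi> (pw i)) *\<^sub>R \<phi> (pw i))"
        unfolding g_def ev_sum ev_monom \<phi>sum \<phi>sc ..
      also have "\<dots> = (\<Sum>v\<in>S. u v *\<^sub>R v)"
        unfolding S_def by (rule sum.reindex[OF inj, symmetric, unfolded comp_def])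
      also have "\<dots> = \<phi> 0" using u(2) unfolding \<phi>_def by (simp add: vec_eq_iff)
      finally show "\<phi> (ev g) = \<phi> 0" .
    qed
    ultimately show ?thesis by blast
  qed
qed

end

locale frpos = frp N e dual p for N :: "'b::finite \<Rightarrow> 'b \<Rightarrow> 'b \<Rightarrow> nat" and e dual p +
  assumes herm: "st p = p"
  and psd: "\<And>u. Im (mult (st u) (mult p u) e) = 0 \<and> 0 \<le> Re (mult (st u) (mult p u) e)"
begin

lemma root_real: assumes "mult (ev [:-z, 1:]) u = 0" "u \<noteq> 0" shows "Im z = 0 \<and> 0 \<le> Re z"
proof -
  have "(\<lambda>k. - z * u k) + mult p u = 0" using assms(1) mult_lin by simp
  then have pu: "mult p u = (\<lambda>k. z * u k)" by (simp add: fun_eq_iff add_eq_0_iff)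
  define t where "t = mult (st u) u e"
  define T where "T = mult (st u) (mult p u) e"
  have "T = z * t" unfolding T_def t_def pu m_scale_right by simp
  have t0: "t \<noteq> 0" using tr_faithful assms(2) unfolding t_def by blast
  have "t = of_real (Re t)" using tr_pos[of u] unfolding t_def by (simp add: complex_eq_iff)
  with t0 have tpos: "Re t > 0" using tr_pos(2)[of u] unfolding t_def by (metis less_eq_real_def of_real_0)
  have Tz: "T = z * of_real (Re t)" using \<open>T = z * t\<close> \<open>t = of_real (Re t)\<close> by simp
  have "Im T = Im z * Re t" "Re T = Re z * Re t" unfolding Tz by simp_all
  moreover have "Im T = 0" "0 \<le> Re T" using psd[of u] unfolding T_def by auto
  ultimately show ?thesis using tpos by (simp add: zero_le_mult_iff)
qed

lemma st_lin: assumes "Im z = 0" shows "st (ev [:-z, 1:]) = ev [:-z, 1:]"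
proof -
  have "cnj z = z" using assms by (simp add: complex_eq_iff)
  then have "map_poly cnj [:-z, 1:] = [:-z, 1:]" by (simp add: map_poly_pCons)
  then show ?thesis using st_ev[OF herm] by simp
qed

lemma kernel_sq: assumes "Im z = 0" "mult (ev [:-z, 1:]) (mult (ev [:-z, 1:]) v) = 0"
  shows "mult (ev [:-z, 1:]) v = 0"
proof -
  define a where "a = ev [:-z, 1:]"
  define w where "w = mult a v"
  have sa: "st a = a" unfolding a_def by (rule st_lin[OF assms(1)])
  have "mult (st w) w = mult (mult (st v) (st a)) w" by (simp only: w_def st_mult)
  also have "\<dots> = mult (mult (st v) a) w" by (simp only: sa)
  also have "\<dots> = mult (st v) (mult a w)" by (simp only: m_assoc)
  also have "mult a w = 0" using assms(2) unfolding w_def a_def .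
  finally have "mult (st w) w = mult (st v) 0" .
  then have "mult (st w) w e = 0" by simp
  then have "w = 0" by (rule tr_faithful)
  then show ?thesis unfolding w_def a_def .
qed

lemma ev_one: "ev 1 = one"
  using ev_const[of 1] by (simp add: one_pCons)

lemma reduce:
  assumes "g \<noteq> 0" "mult (ev g) w = 0"
  shows "\<exists>R. finite R \<and> (\<forall>r\<in>R. 0 \<le> r) \<and> mult (ev (\<Prod>r\<in>R. [:- of_real r, 1:])) w = 0"
  using assms
proof (induct "degree g" arbitrary: g w rule: less_induct)
  case less
  show ?case
  proof (cases "degree g = 0")
    case True
    define c where "c = coeff g 0"
    have g: "g = [:c:]" using degree_0_id[OF True] unfolding c_def by simp
    with less.prems have c0: "c \<noteq> 0" by simp
    have "mult (ev g) w = (\<lambda>k. c * w k)" unfolding g ev_const m_scale_left by simp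
    with less.prems c0 have "w = 0" by (simp add: fun_eq_iff)
    then show ?thesis by (intro exI[of _ "{}"]) simp
  next
    case False
    then have "\<not> constant (poly g)" by (simp add: constant_degree)
    then obtain z where "poly g z = 0" using fundamental_theorem_of_algebra by blast
    then have "[:-z, 1:] dvd g" by (simp add: poly_eq_0_iff_dvd)
    then obtain h where g: "g = [:-z, 1:] * h" by (rule dvdE)
    have h0: "h \<noteq> 0" using less.prems g by auto
    have dg: "degree g = degree h + 1" unfolding g using h0 by (subst degree_mult_eq) auto
    define u where "u = mult (ev h) w"
    have gu: "mult (ev [:-z, 1:]) u = 0" using less.prems(2) unfolding u_def g ev_mult_w .
    show ?thesis
    proof (cases "u = 0")
      case True
      show ?thesis by (rule less.hyps[of h w]) (use dg h0 True u_def in auto)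
    next
      case False
      have z: "Im z = 0" "0 \<le> Re z" using root_real[OF gu False] by auto
      define r where "r = Re z"
      have zr: "z = of_real r" using z unfolding r_def by (simp add: complex_eq_iff)
      define w' where "w' = mult (ev [:-z, 1:]) w"
      have "mult (ev h) w' = mult (ev (h * [:-z, 1:])) w" unfolding w'_def ev_mult_w ..
      also have "\<dots> = 0" using less.prems unfolding g by (simp add: mult.commute)
      finally obtain R' where R': "finite R'" "\<forall>r\<in>R'. 0 \<le> r"
          "mult (ev (\<Prod>r\<in>R'. [:- of_real r, 1:])) w' = 0"
        using less.hyps[of h w'] dg h0 by auto
      show ?thesis
      proof (cases "r \<in> R'")
        case True
        define Q where "Q = (\<Prod>r\<in>R' - {r}. [:- complex_of_real r, 1:])"
        have PR: "(\<Prod>r\<in>R'. [:- of_real r, 1:]) = [:-z, 1:] * Q"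
          unfolding Q_def zr by (rule prod.remove[OF R'(1) True])
        have "mult (ev [:-z, 1:]) (mult (ev [:-z, 1:]) (mult (ev Q) w)) = 0"
          using R'(3) unfolding PR w'_def
          by (metis ev_mult_w mult.commute)
        then have "mult (ev [:-z, 1:]) (mult (ev Q) w) = 0" by (rule kernel_sq[OF z(1)])
        then have "mult (ev (\<Prod>r\<in>R'. [:- of_real r, 1:])) w = 0"
          unfolding PR ev_mult_w .
        then show ?thesis using R' by blast
      next
        case False
        have PR: "(\<Prod>r\<in>insert r R'. [:- of_real r, 1:]) = [:-z, 1:] * (\<Prod>r\<in>R'. [:- of_real r, 1:])"
          unfolding zr by (rule prod.insert[OF R'(1) False])
        have "mult (ev (\<Prod>r\<in>insert r R'. [:- of_real r, 1:])) w = 0"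
          using R'(3) unfolding PR w'_def by (metis ev_mult_w mult.commute)
        then show ?thesis using R' z(2) r_def by (intro exI[of _ "insert r R'"]) auto
      qed
    qed
  qed
qed


lemma sqrt_exists: "\<exists>b. p = mult (st b) b"
proof -
  obtain g where g: "g \<noteq> 0" "ev g = 0" using annih by blast
  then have "mult (ev g) one = 0" by simp
  then obtain R where R: "finite R" "\<forall>r\<in>R. 0 \<le> r" "mult (ev (\<Prod>r\<in>R. [:- of_real r, 1:])) one = 0"
    using reduce[OF g(1)] by blast
  define P where "P = (\<Prod>r\<in>R. [:- complex_of_real r, 1:])"
  have P0: "ev P = 0" using R(3) unfolding P_def by simp
  obtain f where f: "\<forall>r\<in>R. poly f (complex_of_real r) = complex_of_real (sqrt r)" using interp[OF R(1)] by blast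
  define h where "h = map_poly cnj f * f - [:0, 1:]"
  have "\<forall>r\<in>R. poly h (of_real r) = 0"
  proof
    fix r assume r: "r \<in> R"
    have "poly h (of_real r) = cnj (poly f (of_real r)) * poly f (of_real r) - of_real r"
      unfolding h_def by (simp add: poly_map_poly_cnj)
    also have "\<dots> = of_real (sqrt r) * of_real (sqrt r) - of_real r" using f r by simp
    also have "\<dots> = 0"
    proof -
      have "0 \<le> r" using R(2) r by blast
      then have "sqrt r * sqrt r = r" by simp
      then show ?thesis by (metis of_real_mult diff_self)
    qed
    finally show "poly h (of_real r) = 0" .
  qed
  then have "P dvd h" unfolding P_def by (rule prod_dvd[OF R(1)])
  then obtain q where hq: "h = P * q" by (rule dvdE)
  have "ev h = 0" unfolding hq ev_mult P0 by simp
  have "mult (st (ev f)) (ev f) = ev (map_poly cnj f * f)" unfolding st_ev[OF herm] ev_mult ..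
  also have "map_poly cnj f * f = h + [:0, 1:]" unfolding h_def by simp
  also have "ev (h + [:0, 1:]) = p" unfolding ev_add ev_X \<open>ev h = 0\<close> by simp
  finally show ?thesis by metis
qed

end

context fr
begin

lemma pos_sum:
  assumes "finite I"
  shows "alg_pos N dual (\<Sum>i\<in>I. mult (st (f i)) (f i))"
proof -
  define p where "p = (\<Sum>i\<in>I. mult (st (f i)) (f i))"
  have herm: "st p = p" unfolding p_def st_sum st_mult st_st ..
  have eq: "mult (st u) (mult p u) = (\<Sum>i\<in>I. mult (st (mult (f i) u)) (mult (f i) u))" for u
    unfolding p_def m_sum_left m_sum_right st_mult m_assoc ..
  have psd: "Im (mult (st u) (mult p u) e) = 0 \<and> 0 \<le> Re (mult (st u) (mult p u) e)" for u
    unfolding eq sum_fun_apply Im_sum Re_sum using tr_pos by (auto intro: sum_nonneg)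
  interpret frpos N e dual p
    by unfold_locales (use herm psd in auto)
  show ?thesis unfolding alg_pos_def p_def[symmetric] using sqrt_exists by blast
qed

end

context fr begin
lemma sum_prod_UNIV: "(\<Sum>q\<in>UNIV. f q) = (\<Sum>a\<in>UNIV. \<Sum>b\<in>UNIV. f (a, b))"
proof -
  have "(\<Sum>a\<in>UNIV. \<Sum>b\<in>UNIV. f (a, b)) = (\<Sum>q\<in>UNIV \<times> UNIV. case q of (a, b) \<Rightarrow> f (a, b))"
    by (rule sum.cartesian_product)
  then show ?thesis by (simp add: UNIV_Times_UNIV)
qed

lemma tN: "tensor_N N (i1, i2) (j1, j2) (k1, k2) = N i1 j1 k1 * N i2 j2 k2"
  unfolding tensor_N_def by simp

lemma tfr_unitL: "tensor_N N (e, e) j k = (if j = k then 1 else 0)"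
  by (cases j, cases k) (simp add: tN NunitL)
lemma tfr_unitR: "tensor_N N j (e, e) k = (if j = k then 1 else 0)"
  by (cases j, cases k) (simp add: tN NunitR)
lemma tfr_dd: "tensor_dual dual (tensor_dual dual i) = i"
  by (cases i) (simp add: tensor_dual_def)
lemma tfr_Nd: "tensor_N N i j k = tensor_N N (tensor_dual dual j) (tensor_dual dual i) (tensor_dual dual k)"
  by (cases i, cases j, cases k) (simp only: tN tensor_dual_def prod.case, metis Nd)
lemma tfr_Ne: "tensor_N N i j (e, e) = (if i = tensor_dual dual j then 1 else 0)"
  by (cases i, cases j) (simp add: tN tensor_dual_def Ne)

lemma tfr_assoc: "(\<Sum>k\<in>UNIV. tensor_N N i j k * tensor_N N k l p) = (\<Sum>k\<in>UNIV. tensor_N N j l k * tensor_N N i k p)"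
proof -
  obtain i1 i2 j1 j2 l1 l2 p1 p2 where ps: "i = (i1,i2)" "j = (j1,j2)" "l = (l1,l2)" "p = (p1,p2)"
    by (cases i, cases j, cases l, cases p) auto
  have "(\<Sum>k\<in>UNIV. tensor_N N i j k * tensor_N N k l p) =
     (\<Sum>k1\<in>UNIV. \<Sum>k2\<in>UNIV. (N i1 j1 k1 * N k1 l1 p1) * (N i2 j2 k2 * N k2 l2 p2))"
    unfolding ps sum_prod_UNIV tN by (simp only: mult_ac)
  also have "\<dots> = (\<Sum>k1\<in>UNIV. N i1 j1 k1 * N k1 l1 p1) * (\<Sum>k2\<in>UNIV. N i2 j2 k2 * N k2 l2 p2)"
    by (rule sum_product[symmetric])
  also have "\<dots> = (\<Sum>k1\<in>UNIV. N j1 l1 k1 * N i1 k1 p1) * (\<Sum>k2\<in>UNIV. N j2 l2 k2 * N i2 k2 p2)"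
    by (simp only: Nassoc)
  also have "\<dots> = (\<Sum>k1\<in>UNIV. \<Sum>k2\<in>UNIV. (N j1 l1 k1 * N i1 k1 p1) * (N j2 l2 k2 * N i2 k2 p2))"
    by (rule sum_product)
  also have "\<dots> = (\<Sum>k\<in>UNIV. tensor_N N j l k * tensor_N N i k p)"
    unfolding ps sum_prod_UNIV tN by (simp only: mult_ac)
  finally show ?thesis .
qed

lemma tensor_fr: "fusion_ring (tensor_N N) (e, e) (tensor_dual dual)"
  unfolding fusion_ring_def using tfr_assoc tfr_unitL tfr_unitR tfr_dd tfr_Nd tfr_Ne by blast

definition tens1 :: "('b \<Rightarrow> complex) \<Rightarrow> ('b \<times> 'b \<Rightarrow> complex)" where
  "tens1 u = (\<lambda>q. if snd q = e then u (fst q) else 0)"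

lemma multT: "alg_mult (tensor_N N) a b (p1, p2) =
  (\<Sum>a1\<in>UNIV. \<Sum>a2\<in>UNIV. \<Sum>b1\<in>UNIV. \<Sum>b2\<in>UNIV. a (a1, a2) * b (b1, b2) * (of_nat (N a1 b1 p1) * of_nat (N a2 b2 p2)))"
  unfolding alg_mult_def sum_prod_UNIV tN by (simp add: mult_ac)

lemma T1: "alg_mult (tensor_N N) (tens1 u) F (e, l) = (\<Sum>b\<in>UNIV. u (dual b) * F (b, l))"
proof -
  have "alg_mult (tensor_N N) (tens1 u) F (e, l) =
    (\<Sum>a1\<in>UNIV. \<Sum>a2\<in>UNIV. if a2 = e then (\<Sum>b1\<in>UNIV. \<Sum>b2\<in>UNIV. u a1 * F (b1, b2) * (of_nat (N a1 b1 e) * of_nat (N e b2 l))) else 0)"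
    unfolding multT by (rule sum.cong[OF refl])+ (simp add: tens1_def)
  also have "\<dots> = (\<Sum>a1\<in>UNIV. \<Sum>b1\<in>UNIV. \<Sum>b2\<in>UNIV. u a1 * F (b1, b2) * (of_nat (N a1 b1 e) * of_nat (N e b2 l)))"
    by simp
  also have "\<dots> = (\<Sum>a1\<in>UNIV. \<Sum>b1\<in>UNIV. if a1 = dual b1 then u a1 * F (b1, l) else 0)"
  proof (rule sum.cong[OF refl], rule sum.cong[OF refl])
    fix a1 b1
    have "(\<Sum>b2\<in>UNIV. u a1 * F (b1, b2) * (of_nat (N a1 b1 e) * of_nat (N e b2 l))) =
      (\<Sum>b2\<in>UNIV. if b2 = l then u a1 * F (b1, b2) * of_nat (N a1 b1 e) else 0)"
      by (rule sum.cong[OF refl]) (simp add: NunitL)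
    also have "\<dots> = u a1 * F (b1, l) * of_nat (N a1 b1 e)" by simp
    also have "\<dots> = (if a1 = dual b1 then u a1 * F (b1, l) else 0)" by (simp add: Ne)
    finally show "(\<Sum>b2\<in>UNIV. u a1 * F (b1, b2) * (of_nat (N a1 b1 e) * of_nat (N e b2 l))) =
      (if a1 = dual b1 then u a1 * F (b1, l) else 0)" .
  qed
  also have "\<dots> = (\<Sum>b1\<in>UNIV. \<Sum>a1\<in>UNIV. if a1 = dual b1 then u a1 * F (b1, l) else 0)"
    by (rule sum.swap)
  also have "\<dots> = (\<Sum>b\<in>UNIV. u (dual b) * F (b, l))" by simp
  finally show ?thesis .
qed

lemma T1': "alg_mult (tensor_N N) F (tens1 u) (e, l) = (\<Sum>b\<in>UNIV. u (dual b) * F (b, l))"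
proof -
  have "alg_mult (tensor_N N) F (tens1 u) (e, l) =
    (\<Sum>a1\<in>UNIV. \<Sum>a2\<in>UNIV. \<Sum>b1\<in>UNIV. \<Sum>b2\<in>UNIV. if b2 = e then F (a1, a2) * u b1 * (of_nat (N a1 b1 e) * of_nat (N a2 e l)) else 0)"
    unfolding multT by (rule sum.cong[OF refl])+ (simp add: tens1_def)
  also have "\<dots> = (\<Sum>a1\<in>UNIV. \<Sum>a2\<in>UNIV. \<Sum>b1\<in>UNIV. F (a1, a2) * u b1 * (of_nat (N a1 b1 e) * of_nat (N a2 e l)))"
    by simp
  also have "\<dots> = (\<Sum>a1\<in>UNIV. \<Sum>a2\<in>UNIV. if a2 = l then (\<Sum>b1\<in>UNIV. F (a1, l) * u b1 * of_nat (N a1 b1 e)) else 0)"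
    by (rule sum.cong[OF refl])+ (simp add: NunitR)
  also have "\<dots> = (\<Sum>a1\<in>UNIV. \<Sum>b1\<in>UNIV. F (a1, l) * u b1 * of_nat (N a1 b1 e))"
    by simp
  also have "\<dots> = (\<Sum>a1\<in>UNIV. \<Sum>b1\<in>UNIV. if b1 = dual a1 then F (a1, l) * u b1 else 0)"
    by (rule sum.cong[OF refl])+ (auto simp: Ne)
  also have "\<dots> = (\<Sum>b\<in>UNIV. u (dual b) * F (b, l))" by (simp add: mult.commute)
  finally show ?thesis .
qed

lemma sum_if_const: "(\<Sum>y\<in>A. if P then g y else 0) = (if P then sum g A else 0)"
  by (cases P) simp_all

lemma multT2: "alg_mult (tensor_N N) a b (p1, p2) =
  (\<Sum>a1\<in>UNIV. \<Sum>b1\<in>UNIV. \<Sum>a2\<in>UNIV. \<Sum>b2\<in>UNIV. a (a1, a2) * b (b1, b2) * (of_nat (N a1 b1 p1) * of_nat (N a2 b2 p2)))"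
  unfolding multT by (rule sum.cong[OF refl], rule sum.swap)

lemma tens1_mult: "alg_mult (tensor_N N) (tens1 a) (tens1 b) = tens1 (mult a b)"
proof
  fix q :: "'b \<times> 'b"
  obtain p1 p2 where q: "q = (p1, p2)" by (cases q)
  have "alg_mult (tensor_N N) (tens1 a) (tens1 b) (p1, p2) =
    (\<Sum>a1\<in>UNIV. \<Sum>b1\<in>UNIV. \<Sum>a2\<in>UNIV. \<Sum>b2\<in>UNIV. if a2 = e then (if b2 = e then a a1 * b b1 * (of_nat (N a1 b1 p1) * of_nat (N e e p2)) else 0) else 0)"
    unfolding multT2 by (rule sum.cong[OF refl])+ (simp add: tens1_def)
  also have "\<dots> = (\<Sum>a1\<in>UNIV. \<Sum>b1\<in>UNIV. a a1 * b b1 * (of_nat (N a1 b1 p1) * of_nat (N e e p2)))"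
    by (simp add: sum_if_const)
  also have "\<dots> = tens1 (mult a b) (p1, p2)"
    unfolding tens1_def alg_mult_def by (simp add: NunitL sum_distrib_right)
  finally show "alg_mult (tensor_N N) (tens1 a) (tens1 b) q = tens1 (mult a b) q" unfolding q .
qed

lemma e_eq_dual[simp]: "e = dual k \<longleftrightarrow> k = e"
  by (metis dd dual_e)

lemma tens1_st: "alg_star (tensor_dual dual) (tens1 a) = tens1 (st a)"
  unfolding tens1_def alg_star_def tensor_dual_def by (rule ext) auto

lemma y_conj: "mult (st (\<lambda>k. cnj (c k))) (\<lambda>k. cnj (c k)) (dual l) = mult (st c) c l"
proof -
  have "mult (st (\<lambda>k. cnj (c k))) (\<lambda>k. cnj (c k)) (dual l) =
     (\<Sum>i\<in>UNIV. \<Sum>j\<in>UNIV. c (dual i) * cnj (c j) * of_nat (N (dual j) (dual i) l))"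
    unfolding alg_mult_def alg_star_def by (simp add: Nd[of _ _ "dual l"])
  also have "\<dots> = (\<Sum>i\<in>UNIV. \<Sum>j\<in>UNIV. c i * cnj (c (dual j)) * of_nat (N j i l))"
  proof -
    have "(\<Sum>i\<in>UNIV. \<Sum>j\<in>UNIV. c (dual i) * cnj (c j) * of_nat (N (dual j) (dual i) l)) =
      (\<Sum>i\<in>UNIV. \<Sum>j\<in>UNIV. c i * cnj (c j) * of_nat (N (dual j) i l))"
      by (rule reidx)
    also have "\<dots> = (\<Sum>i\<in>UNIV. \<Sum>j\<in>UNIV. c i * cnj (c (dual j)) * of_nat (N j i l))"
      by (rule sum.cong[OF refl], rule reidx'[of "\<lambda>j. c _ * cnj (c j) * of_nat (N (dual j) _ l)", simplified])
    finally show ?thesis .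
  qed
  also have "\<dots> = (\<Sum>j\<in>UNIV. \<Sum>i\<in>UNIV. c i * cnj (c (dual j)) * of_nat (N j i l))"
    by (rule sum.swap)
  also have "\<dots> = mult (st c) c l"
    unfolding alg_mult_def alg_star_def by (simp add: mult_ac)
  finally show ?thesis .
qed


lemma T3: "alg_mult (tensor_N N) (alg_star (tensor_dual dual) E) E (e, l) =
  (\<Sum>i\<in>UNIV. mult (st (\<lambda>q. E (i, q))) (\<lambda>q. E (i, q))) l"
proof -
  have "alg_mult (tensor_N N) (alg_star (tensor_dual dual) E) E (e, l) =
    (\<Sum>a1\<in>UNIV. \<Sum>b1\<in>UNIV. \<Sum>a2\<in>UNIV. \<Sum>b2\<in>UNIV. cnj (E (dual a1, dual a2)) * E (b1, b2) * (of_nat (N a1 b1 e) * of_nat (N a2 b2 l)))"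
    unfolding multT2 alg_star_def tensor_dual_def by simp
  also have "\<dots> = (\<Sum>a1\<in>UNIV. \<Sum>b1\<in>UNIV. if a1 = dual b1 then (\<Sum>a2\<in>UNIV. \<Sum>b2\<in>UNIV. cnj (E (b1, dual a2)) * E (b1, b2) * of_nat (N a2 b2 l)) else 0)"
  proof (rule sum.cong[OF refl], rule sum.cong[OF refl])
    fix a1 b1
    show "(\<Sum>a2\<in>UNIV. \<Sum>b2\<in>UNIV. cnj (E (dual a1, dual a2)) * E (b1, b2) * (of_nat (N a1 b1 e) * of_nat (N a2 b2 l))) =
      (if a1 = dual b1 then (\<Sum>a2\<in>UNIV. \<Sum>b2\<in>UNIV. cnj (E (b1, dual a2)) * E (b1, b2) * of_nat (N a2 b2 l)) else 0)"
      by (cases "a1 = dual b1") (simp_all add: Ne)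
  qed
  also have "\<dots> = (\<Sum>b1\<in>UNIV. \<Sum>a1\<in>UNIV. if a1 = dual b1 then (\<Sum>a2\<in>UNIV. \<Sum>b2\<in>UNIV. cnj (E (b1, dual a2)) * E (b1, b2) * of_nat (N a2 b2 l)) else 0)"
    by (rule sum.swap)
  also have "\<dots> = (\<Sum>b1\<in>UNIV. \<Sum>a2\<in>UNIV. \<Sum>b2\<in>UNIV. cnj (E (b1, dual a2)) * E (b1, b2) * of_nat (N a2 b2 l))"
    by simp
  also have "\<dots> = (\<Sum>i\<in>UNIV. mult (st (\<lambda>q. E (i, q))) (\<lambda>q. E (i, q))) l"
    unfolding sum_fun_apply alg_mult_def alg_star_def by simp
  finally show ?thesis .
qed

end

theorem mainTheorem14:
  fixes N :: "'a::finite \<Rightarrow> 'a \<Rightarrow> 'a \<Rightarrow> nat" and e :: 'a and dual :: "'a \<Rightarrow> 'a"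
  assumes "fusion_ring N e dual"
    and "\<forall>a. alg_pos N dual a \<longrightarrow> alg_pos (tensor_N N) (tensor_dual dual) (comult N e dual a)"
    and "alg_pos N dual x" and "alg_pos N dual y"
  shows "alg_pos N dual (convolution N e dual x y)"
proof -
  interpret A: fr N e dual by (rule fr.intro[OF assms(1)])
  interpret T: fr "tensor_N N" "(e, e)" "tensor_dual dual" by (rule fr.intro[OF A.tensor_fr])
  let ?mT = "alg_mult (tensor_N N)"
  let ?sT = "alg_star (tensor_dual dual)"
  obtain c where yc: "y = alg_mult N (alg_star dual c) c" using assms(4) unfolding alg_pos_def by blast
  obtain D where xD: "comult N e dual x = ?mT (?sT D) D" using assms(2,3) unfolding alg_pos_def by blast
  define cb where "cb = (\<lambda>k. cnj (c k))"
  define U where "U = A.tens1 cb"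
  define u where "u = alg_mult N (alg_star dual cb) cb"
  define E where "E = ?mT D (?sT U)"
  have step1: "convolution N e dual x y l = ?mT (A.tens1 u) (comult N e dual x) (e, l)" for l
  proof -
    have "?mT (A.tens1 u) (comult N e dual x) (e, l) = (\<Sum>b\<in>UNIV. u (dual b) * comult N e dual x (b, l))"
      by (rule A.T1)
    also have "\<dots> = (\<Sum>b\<in>UNIV. if b = l then u (dual b) * (x b / of_real (fp_dim N e dual b)) else 0)"
      by (rule sum.cong[OF refl]) (simp add: comult_def)
    also have "\<dots> = u (dual l) * (x l / of_real (fp_dim N e dual l))" by simp
    also have "u (dual l) = y l" unfolding u_def cb_def yc by (rule A.y_conj)
    finally show ?thesis unfolding convolution_def by (simp add: mult.commute)
  qed
  have step2: "A.tens1 u = ?mT (?sT U) U"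
    unfolding U_def A.tens1_st A.tens1_mult u_def ..
  have step4: "?mT (A.tens1 a) F (e, l) = ?mT F (A.tens1 a) (e, l)" for a F l
    unfolding A.T1 A.T1' ..
  have "convolution N e dual x y l = ?mT (?mT (?sT U) U) (?mT (?sT D) D) (e, l)" for l
    unfolding step1 step2 xD ..
  also have "?mT (?mT (?sT U) U) (?mT (?sT D) D) = ?mT (?sT U) (?mT U (?mT (?sT D) D))"
    by (rule T.m_assoc)
  also have "?sT U = A.tens1 (alg_star dual cb)" unfolding U_def by (rule A.tens1_st)
  also have "?mT (A.tens1 (alg_star dual cb)) (?mT U (?mT (?sT D) D)) (e, l) =
             ?mT (?mT U (?mT (?sT D) D)) (A.tens1 (alg_star dual cb)) (e, l)" for l
    by (rule step4)
  also have "A.tens1 (alg_star dual cb) = ?sT U" unfolding U_def by (rule A.tens1_st[symmetric])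
  also have "?mT (?mT U (?mT (?sT D) D)) (?sT U) = ?mT (?sT E) E"
    unfolding E_def T.st_mult T.st_st by (simp only: T.m_assoc)
  finally have conv: "convolution N e dual x y l = (\<Sum>i\<in>UNIV. alg_mult N (alg_star dual (\<lambda>q. E (i, q))) (\<lambda>q. E (i, q))) l" for l
    unfolding A.T3 .
  have "convolution N e dual x y = (\<Sum>i\<in>UNIV. alg_mult N (alg_star dual (\<lambda>q. E (i, q))) (\<lambda>q. E (i, q)))"
    using conv by (rule ext)
  then show ?thesis using A.pos_sum[of UNIV "\<lambda>i q. E (i, q)"] by simp
qed

end
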